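(* Let $K\ge 2$, let $\Delta^{K-1}=\{\boldsymbol{p}\in[0,1]^K:\sum_{k=1}^K p_k=1\}$, and let $\boldsymbol{\alpha}=(\alpha_1,\dots,\alpha_K)$ with $\alpha_k>1$ for all $k$ and $\alpha_0=\sum_{k=1}^K\alpha_k$. Let $g(\boldsymbol{p})=\alpha_0^{\alpha_0}\prod_{k=1}^K (p_k/\alpha_k)^{\alpha_k}$ be the Dirichlet possibility function with parameter $\boldsymbol{\alpha}$, so that $\log g(\boldsymbol{p})=\alpha_0\log\alpha_0+\sum_{k=1}^K\alpha_k\log(p_k/\alpha_k)$. Let $\boldsymbol{y}\in\{0,1\}^K$ be a one-hot label vector and let $\ell(\boldsymbol{p},\boldsymbol{y})=-\sum_{k=1}^K y_k\log p_k$ be the cross-entropy loss. Then the maximiser $$\tilde{\boldsymbol{p}}^*=\arg\max_{\boldsymbol{p}\in\Delta^{K-1}}\big[\log g(\boldsymbol{p})+\ell(\boldsymbol{p},\boldsymbol{y})\big]$$ is given by $$\tilde{\boldsymbol{p}}^*=\frac{1}{\alpha_0-1}(\boldsymbol{\alpha}-\boldsymbol{y}).$$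
   Context: In the paper, $\boldsymbol{\alpha}=\Phi'_{\boldsymbol{\psi}}(\boldsymbol{x})$ is the output of a neural network for an input $\boldsymbol{x}$, and $g=g_{\boldsymbol{\psi}}(\cdot\mid\boldsymbol{x})$ is the learned Dirichlet possibility function on the probability simplex; the result concerns only the fixed vector $\boldsymbol{\alpha}$. Convention: $\alpha_k^{\alpha_k}=1$ when $\alpha_k=0$ (not needed here since $\alpha_k>1$). *)

theory Defs
  imports "HOL-Analysis.Analysis"
begin

text \<open>Vectors in R^K are functions nat => real, indexed by {1..K}.\<close>

definition prob_simplex :: "nat \<Rightarrow> (nat \<Rightarrow> real) set" where
  "prob_simplex K = {p. (\<forall>k\<in>{1..K}. 0 \<le> p k \<and> p k \<le> 1) \<and> (\<Sum>k=1..K. p k) = 1}"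

definition alpha0 :: "nat \<Rightarrow> (nat \<Rightarrow> real) \<Rightarrow> real" where
  "alpha0 K \<alpha> = (\<Sum>k=1..K. \<alpha> k)"

definition dir_poss :: "nat \<Rightarrow> (nat \<Rightarrow> real) \<Rightarrow> (nat \<Rightarrow> real) \<Rightarrow> real" where
  "dir_poss K \<alpha> p = alpha0 K \<alpha> powr alpha0 K \<alpha> * (\<Prod>k=1..K. (p k / \<alpha> k) powr \<alpha> k)"

definition cross_entropy :: "nat \<Rightarrow> (nat \<Rightarrow> real) \<Rightarrow> (nat \<Rightarrow> real) \<Rightarrow> real" where
  "cross_entropy K p y = - (\<Sum>k=1..K. y k * ln (p k))"

definition one_hot :: "nat \<Rightarrow> (nat \<Rightarrow> real) \<Rightarrow> bool" where
  "one_hot K y \<longleftrightarrow> (\<forall>k\<in>{1..K}. y k = 0 \<or> y k = 1) \<and> (\<Sum>k=1..K. y k) = 1"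

text \<open>Objective log g(p) + l(p,y); it is finite exactly on the relative interior
  of the simplex (all p_k > 0); on the boundary it equals -infinity.\<close>
definition objective :: "nat \<Rightarrow> (nat \<Rightarrow> real) \<Rightarrow> (nat \<Rightarrow> real) \<Rightarrow> (nat \<Rightarrow> real) \<Rightarrow> real" where
  "objective K \<alpha> y p = ln (dir_poss K \<alpha> p) + cross_entropy K p y"

end

theory Submission
  imports Defs
begin

theorem proposition1:
  fixes K :: nat and \<alpha> y :: "nat \<Rightarrow> real"
  assumes "K \<ge> 2"
    and "\<forall>k\<in>{1..K}. \<alpha> k > 1"
    and "one_hot K y"
  defines "pt \<equiv> (\<lambda>k. (\<alpha> k - y k) / (alpha0 K \<alpha> - 1))"
  shows "pt \<in> prob_simplex K \<and> (\<forall>k\<in>{1..K}. pt k > 0)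
    \<and> (\<forall>p\<in>prob_simplex K. (\<forall>k\<in>{1..K}. p k > 0) \<longrightarrow>
          objective K \<alpha> y p \<le> objective K \<alpha> y pt
          \<and> (objective K \<alpha> y p = objective K \<alpha> y pt \<longrightarrow> (\<forall>k\<in>{1..K}. p k = pt k)))"
proof -
  define B where "B = alpha0 K \<alpha> - 1"
  have y01: "\<And>k. k \<in> {1..K} \<Longrightarrow> y k = 0 \<or> y k = 1" and ysum: "(\<Sum>k=1..K. y k) = 1"
    using assms(3) unfolding one_hot_def by auto
  have bpos: "\<And>k. k \<in> {1..K} \<Longrightarrow> \<alpha> k - y k > 0"
    using y01 assms(2) by force
  have "(\<Sum>k=1..K. (1::real)) \<le> (\<Sum>k=1..K. \<alpha> k)"
    by (rule sum_mono) (use assms(2) in force)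
  hence a0: "alpha0 K \<alpha> \<ge> K" unfolding alpha0_def by simp
  hence Bpos: "B > 0" using assms(1) unfolding B_def by simp
  have bsum: "(\<Sum>k=1..K. \<alpha> k - y k) = B"
    unfolding B_def alpha0_def using ysum by (simp add: sum_subtractf)
  have pt_eq: "\<And>k. pt k = (\<alpha> k - y k) / B" unfolding pt_def B_def by simp
  have ptpos: "\<forall>k\<in>{1..K}. pt k > 0" using bpos Bpos pt_eq by simp
  have ptsum: "(\<Sum>k=1..K. pt k) = 1"
    using bsum Bpos by (simp add: pt_eq flip: sum_divide_distrib)
  have ptle: "\<forall>k\<in>{1..K}. pt k \<le> 1"
  proof
    fix k assume k: "k \<in> {1..K}"
    have "pt k \<le> (\<Sum>j=1..K. pt j)"
      by (rule member_le_sum) (use k ptpos in \<open>auto intro: less_imp_le\<close>)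
    thus "pt k \<le> 1" using ptsum by simp
  qed
  have ptS: "pt \<in> prob_simplex K"
    unfolding prob_simplex_def using ptpos ptle ptsum by (auto simp: less_imp_le)
  define C where "C = alpha0 K \<alpha> * ln (alpha0 K \<alpha>) - (\<Sum>k=1..K. \<alpha> k * ln (\<alpha> k))"
  have obj: "objective K \<alpha> y p = C + (\<Sum>k=1..K. (\<alpha> k - y k) * ln (p k))"
    if pp: "\<forall>k\<in>{1..K}. p k > 0" for p
  proof -
    have a0pos: "alpha0 K \<alpha> > 0" using a0 assms(1) by simp
    have fpos: "\<And>k. k \<in> {1..K} \<Longrightarrow> (p k / \<alpha> k) powr \<alpha> k > 0"
      using pp assms(2) by force
    have "ln (dir_poss K \<alpha> p) = ln (alpha0 K \<alpha> powr alpha0 K \<alpha>)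
        + ln (\<Prod>k=1..K. (p k / \<alpha> k) powr \<alpha> k)"
      unfolding dir_poss_def using a0pos fpos
      by (subst ln_mult) (auto intro: prod_pos)
    also have "\<dots> = alpha0 K \<alpha> * ln (alpha0 K \<alpha>) + (\<Sum>k=1..K. \<alpha> k * (ln (p k) - ln (\<alpha> k)))"
      using fpos pp assms(2)
      by (subst ln_prod) (auto intro!: sum.cong simp: ln_div)
    finally show ?thesis
      unfolding objective_def cross_entropy_def C_def
      by (simp add: algebra_simps sum_subtractf sum.distrib sum_negf)
  qed
  have main: "objective K \<alpha> y p \<le> objective K \<alpha> y pt
          \<and> (objective K \<alpha> y p = objective K \<alpha> y pt \<longrightarrow> (\<forall>k\<in>{1..K}. p k = pt k))"
    if pS: "p \<in> prob_simplex K" and pp: "\<forall>k\<in>{1..K}. p k > 0" for p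
  proof -
    have psum: "(\<Sum>k=1..K. p k) = 1" using pS unfolding prob_simplex_def by simp
    define x where "x k = p k / pt k" for k
    have xpos: "\<And>k. k \<in> {1..K} \<Longrightarrow> x k > 0" using pp ptpos x_def by simp
    define T where "T k = (\<alpha> k - y k) * (x k - 1 - ln (x k))" for k
    have Tnn: "\<And>k. k \<in> {1..K} \<Longrightarrow> T k \<ge> 0"
      unfolding T_def using bpos xpos ln_le_minus_one
      by (metis diff_ge_0_iff_ge less_imp_le mult_nonneg_nonneg)
    have Tk: "T k = B * p k - (\<alpha> k - y k) - ((\<alpha> k - y k) * ln (p k) - (\<alpha> k - y k) * ln (pt k))"
      if k: "k \<in> {1..K}" for k
    proof -
      have h1: "(\<alpha> k - y k) * x k = B * p k"
        unfolding x_def pt_eq using bpos[OF k] Bpos by (simp add: field_simps)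
      have h2: "ln (x k) = ln (p k) - ln (pt k)"
      proof -
        have "p k > 0" "pt k > 0" using pp ptpos k by auto
        thus ?thesis unfolding x_def by (simp add: ln_div)
      qed
      show ?thesis unfolding T_def h2 right_diff_distrib h1 by simp
    qed
    have Tsum: "(\<Sum>k=1..K. T k) = objective K \<alpha> y pt - objective K \<alpha> y p"
    proof -
      have "(\<Sum>k=1..K. T k) = (\<Sum>k=1..K. B * p k - (\<alpha> k - y k) - ((\<alpha> k - y k) * ln (p k) - (\<alpha> k - y k) * ln (pt k)))"
        using Tk by (rule sum.cong[OF refl])
      also have "\<dots> = B * (\<Sum>k=1..K. p k) - (\<Sum>k=1..K. \<alpha> k - y k)
          - ((\<Sum>k=1..K. (\<alpha> k - y k) * ln (p k)) - (\<Sum>k=1..K. (\<alpha> k - y k) * ln (pt k)))"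
        by (simp only: sum_subtractf sum_distrib_left)
      also have "\<dots> = objective K \<alpha> y pt - objective K \<alpha> y p"
        using obj[OF pp] obj[OF ptpos] psum bsum by simp
      finally show ?thesis .
    qed
    have le: "objective K \<alpha> y p \<le> objective K \<alpha> y pt"
      using sum_nonneg[of "{1..K}" T] Tnn Tsum by simp
    have eq: "\<forall>k\<in>{1..K}. p k = pt k" if e: "objective K \<alpha> y p = objective K \<alpha> y pt"
    proof
      fix k assume k: "k \<in> {1..K}"
      have "(\<Sum>k=1..K. T k) = 0" using Tsum e by simp
      hence "T k = 0" using sum_nonneg_eq_0_iff[of "{1..K}" T] Tnn k by simp
      hence "ln (x k) = x k - 1" using bpos[OF k] unfolding T_def by simp
      hence "x k = 1" using ln_eq_minus_one xpos[OF k] by simp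
      thus "p k = pt k" using ptpos k unfolding x_def by simp
    qed
    show ?thesis using le eq by blast
  qed
  show ?thesis using ptS ptpos main by blast
qed

end
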